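(* Consider the UAV Persistent Service model in the homogeneous case $g_i=g$ for all $i\in\mathcal N$, with $N=|\mathcal N|\ge 1$, $f>0$, $c\ge 0$, $g>0$, $2g<f$. Run the HoRR schedule with a fleet of $$M=N+\left\lceil \frac{c+2g}{f-2g}\,N\right\rceil$$ UAVs. Then at every dispatch time a fully charged backup UAV is available at the RS, no UAV ever flies longer than $f$ time units between two recharges, and every location in $\mathcal N$ is covered at every time $t\ge 0$.
   Context: UAV Persistent Service model: there is a single recharging station (RS) and a finite set $\mathcal N$ of $N$ aerial locations, served by a fleet of identical UAVs. A UAV with a full battery can fly for at most $f>0$ time units; replacing/recharging its battery at the RS takes $c\ge 0$ time units, after which it is fully charged again. Flying between the RS and location $i$ (in either direction) takes the displacement time $g_i>0$, with $2g_i<f$. A UAV's activity consists of sorties: it leaves the RS fully charged, flies to one location, stays there (it is then said to cover that location), flies back to the RS, and the total airborne time of the sortie is at most $f$; back at the RS it spends $c$ time units recharging (and may then wait idle) before its next sortie. At time $0$ every UAV is fully charged, either at the RS or already at a location. A location is covered at time $t$ if some UAV is at that location at time $t$. HoRR schedule (homogeneous case $g_i=g$): let $x=\frac{f-2g}{N}$. At time $0$, one fully charged UAV is placed at each of the $N$ locations; the remaining UAVs (backups) are fully charged at the RS. For every $k=1,2,\dots$: a fully charged backup UAV departs the RS at time $kx-g$ (if this is negative it is considered already en route at time $0$) and arrives at time $kx$ at the location of the serving UAV with the least remaining energy (ties broken arbitrarily); it takes over that location, and the relieved UAV flies back to the RS (arriving at $kx+g$), recharges (until $kx+g+c$) and then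 becomes a backup. Backups are dispatched in the order in which they became ready. *)

theory Defs
  imports Complex_Main
begin

text \<open>
  Locations are indexed by 0..<N, UAVs by 0..<M.
  Parameters: f (max flight time), g (displacement time RS to any location),
  c (recharge time).
  The state of the schedule after the k-th dispatch (k = 0: initial state) is a triple
    (serv, dep, q)
  where serv i is the UAV serving location i, dep u is the time at which UAV u
  last left the RS fully charged (0 for UAVs that are at a location or en route
  at time 0, since every UAV is fully charged at time 0), and q is the queue of
  backup UAVs together with the time at which each became ready (fully charged
  at the RS), in the order in which they became ready.
  The tie-breaking rule is a parameter tb: at dispatch k, among the set S of
  locations whose serving UAV has least remaining energy, location tb k S is chosen.
\<close>

type_synonym horr_state = "(nat \<Rightarrow> nat) \<times> (nat \<Rightarrow> real) \<times> (nat \<times> real) list"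

definition horr_x :: "nat \<Rightarrow> real \<Rightarrow> real \<Rightarrow> real" where
  "horr_x N f g = (f - 2 * g) / real N"

definition remaining_energy :: "real \<Rightarrow> (nat \<Rightarrow> real) \<Rightarrow> nat \<Rightarrow> real \<Rightarrow> real" where
  "remaining_energy f dep u t = f - (t - dep u)"

definition least_energy_locs ::
    "nat \<Rightarrow> real \<Rightarrow> (nat \<Rightarrow> nat) \<Rightarrow> (nat \<Rightarrow> real) \<Rightarrow> real \<Rightarrow> nat set" where
  "least_energy_locs N f serv dep t =
     {i. i < N \<and> (\<forall>j<N. remaining_energy f dep (serv i) t \<le> remaining_energy f dep (serv j) t)}"

fun horr :: "nat \<Rightarrow> real \<Rightarrow> real \<Rightarrow> real \<Rightarrow> nat \<Rightarrow> (nat \<Rightarrow> nat set \<Rightarrow> nat) \<Rightarrow> nat \<Rightarrow> horr_state" where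
  "horr N f g c M tb 0 = ((\<lambda>i. i), (\<lambda>u. 0), map (\<lambda>u. (u, 0)) [N..<M])"
| "horr N f g c M tb (Suc k) =
     (let (serv, dep, q) = horr N f g c M tb k;
          t = real (Suc k) * horr_x N f g;
          l = tb (Suc k) (least_energy_locs N f serv dep t);
          b = fst (hd q)
      in (serv(l := b), dep(b := max 0 (t - g)), tl q @ [(serv l, t + g + c)]))"

definition horr_serv where "horr_serv N f g c M tb k = fst (horr N f g c M tb k)"
definition horr_dep where "horr_dep N f g c M tb k = fst (snd (horr N f g c M tb k))"
definition horr_queue where "horr_queue N f g c M tb k = snd (snd (horr N f g c M tb k))"

text \<open>Location chosen at dispatch k (k \<ge> 1), taking place at time k*x.\<close>
definition horr_loc :: "nat \<Rightarrow> real \<Rightarrow> real \<Rightarrow> real \<Rightarrow> nat \<Rightarrow> (nat \<Rightarrow> nat set \<Rightarrow> nat) \<Rightarrow> nat \<Rightarrow> nat" where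
  "horr_loc N f g c M tb k =
     tb k (least_energy_locs N f (horr_serv N f g c M tb (k - 1)) (horr_dep N f g c M tb (k - 1))
             (real k * horr_x N f g))"

definition horr_relieved where
  "horr_relieved N f g c M tb k = horr_serv N f g c M tb (k - 1) (horr_loc N f g c M tb k)"

text \<open>At dispatch k (departure time k*x - g, or time 0 if that is negative), a fully
  charged backup is available at the RS: the backup queue is nonempty and its head
  became ready no later than the departure time.\<close>
definition backup_available where
  "backup_available N f g c M tb k \<longleftrightarrow>
     horr_queue N f g c M tb (k - 1) \<noteq> [] \<and>
     snd (hd (horr_queue N f g c M tb (k - 1))) \<le> max 0 (real k * horr_x N f g - g)"

text \<open>Total airborne time of the sortie ended by the relief at dispatch k:
  from the relieved UAV's last departure until its return to the RS at k*x + g.\<close>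
definition relief_flight_time where
  "relief_flight_time N f g c M tb k =
     real k * horr_x N f g + g - horr_dep N f g c M tb (k - 1) (horr_relieved N f g c M tb k)"

definition horr_at where
  "horr_at N f g c M tb u i t \<longleftrightarrow>
     (\<exists>k::nat. real k * horr_x N f g \<le> t \<and> t < real (Suc k) * horr_x N f g \<and>
               horr_serv N f g c M tb k i = u)"

definition horr_covered where
  "horr_covered N f g c M tb i t \<longleftrightarrow> (\<exists>u<M. horr_at N f g c M tb u i t)"

end

theory Submission
  imports Defs "HOL-Library.Multiset"
begin

locale hs =
  fixes N :: nat and f g c :: real and tb :: "nat \<Rightarrow> nat set \<Rightarrow> nat" and M :: nat
  assumes N1: "N \<ge> 1" and fpos: "f > 0" and cnn: "c \<ge> 0" and gpos: "g > 0" and g2: "2 * g < f"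
    and tb: "\<And>k S. S \<noteq> {} \<Longrightarrow> S \<subseteq> {..<N} \<Longrightarrow> tb k S \<in> S"
    and M: "M = N + nat \<lceil>(c + 2 * g) / (f - 2 * g) * real N\<rceil>"
begin

abbreviation "x \<equiv> horr_x N f g"
abbreviation "B \<equiv> M - N"
definition D :: "nat \<Rightarrow> nat \<Rightarrow> real" where "D k j = max 0 ((real k - real j) * x - g)"

lemma xpos: "x > 0" using N1 g2 by (simp add: horr_x_def)
lemma Nx: "real N * x = f - 2 * g" using N1 by (simp add: horr_x_def)

lemma B1: "B \<ge> 1"
proof -
  have "(c + 2 * g) / (f - 2 * g) * real N > 0" using N1 cnn gpos g2 by auto
  hence "\<lceil>(c + 2 * g) / (f - 2 * g) * real N\<rceil> > 0" by simp
  hence "\<lceil>(c + 2 * g) / (f - 2 * g) * real N\<rceil> \<ge> 1" by linarith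
  thus ?thesis using M by linarith
qed

lemma Bx: "real B * x \<ge> c + 2 * g"
proof -
  have "(c + 2 * g) / (f - 2 * g) * real N \<ge> 0" using N1 cnn gpos g2 by auto
  hence "real B = of_int \<lceil>(c + 2 * g) / (f - 2 * g) * real N\<rceil>" using M by simp
  hence "real B \<ge> (c + 2 * g) / (f - 2 * g) * real N" by (simp add: le_of_int_ceiling)
  hence "real B * x \<ge> (c + 2 * g) / (f - 2 * g) * real N * x" by (rule mult_right_mono) (use xpos in auto)
  also have "(c + 2 * g) / (f - 2 * g) * real N * x = (c + 2 * g) / (f - 2 * g) * (real N * x)"
    by (simp only: mult.assoc)
  also have "\<dots> = c + 2 * g" using Nx g2 by simp
  finally show ?thesis .
qed

lemma D_mono: "j \<le> j' \<Longrightarrow> D k j' \<le> D k j"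
proof -
  assume "j \<le> j'"
  hence "(real k - real j') * x \<le> (real k - real j) * x" using xpos by (intro mult_right_mono) auto
  thus ?thesis unfolding D_def by (auto intro!: max.mono)
qed

abbreviation "H \<equiv> horr N f g c M tb"
abbreviation "loc \<equiv> horr_loc N f g c M tb"

lemma step:
  assumes "H k = (s, d, q)"
  shows "H (Suc k) = (s(loc (Suc k) := fst (hd q)), d(fst (hd q) := max 0 (real (Suc k) * x - g)),
            tl q @ [(s (loc (Suc k)), real (Suc k) * x + g + c)])"
    and "loc (Suc k) = tb (Suc k) (least_energy_locs N f s d (real (Suc k) * x))"
  using assms by (simp_all add: horr_loc_def horr_serv_def horr_dep_def Let_def)

definition inv where
  "inv k s d q \<longleftrightarrow> mset (map fst q @ map s [0..<N]) = mset [0..<M] \<and> length q = B \<and>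
     (\<forall>p<B. snd (q ! p) = 0 \<or> snd (q ! p) \<le> (real k + 1 + real p - real B) * x + g + c) \<and>
     mset (map (\<lambda>i. d (s i)) [0..<N]) = mset (map (D k) [0..<N])"

lemma least_ok:
  assumes "mset (map (\<lambda>i. d (s i)) [0..<N]) = mset (map (D k) [0..<N])"
  defines "l \<equiv> tb (Suc k) (least_energy_locs N f s d (real (Suc k) * x))"
  shows "l < N" "\<And>j. j < N \<Longrightarrow> d (s l) \<le> d (s j)" "d (s l) = D k (N - 1)"
proof -
  let ?L = "least_energy_locs N f s d (real (Suc k) * x)"
  have fin: "finite ((\<lambda>i. d (s i)) ` {..<N})" by simp
  have ne: "(\<lambda>i. d (s i)) ` {..<N} \<noteq> {}" using N1 by (simp add: lessThan_empty_iff)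
  obtain i0 where i0: "i0 < N" "d (s i0) = Min ((\<lambda>i. d (s i)) ` {..<N})"
    using Min_in[OF fin ne] by auto
  have "i0 \<in> ?L" using i0 fin
    by (auto simp: least_energy_locs_def remaining_energy_def)
  hence "?L \<noteq> {}" by auto
  moreover have "?L \<subseteq> {..<N}" by (auto simp: least_energy_locs_def)
  ultimately have lL: "l \<in> ?L" unfolding l_def by (rule tb)
  thus "l < N" by (simp add: least_energy_locs_def)
  show le: "\<And>j. j < N \<Longrightarrow> d (s l) \<le> d (s j)" using lL
    by (auto simp: least_energy_locs_def remaining_energy_def)
  have setE: "set (map (\<lambda>i. d (s i)) [0..<N]) = set (map (D k) [0..<N])"
    using assms(1) by (metis set_mset_mset)
  have "d (s l) \<in> set (map (D k) [0..<N])" using setE \<open>l < N\<close> by auto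
  hence a: "d (s l) \<ge> D k (N - 1)" using D_mono by auto
  have "D k (N - 1) \<in> set (map (\<lambda>i. d (s i)) [0..<N])" using setE N1 by auto
  then obtain j where "j < N" "d (s j) = D k (N - 1)" by auto
  with le a show "d (s l) = D k (N - 1)" by force
qed

lemma inv_all: "H k = (s, d, q) \<Longrightarrow> inv k s d q"
proof (induction k arbitrary: s d q)
  case 0
  have NM: "N \<le> M" using M by simp
  have xj: "\<And>j. 0 \<le> real j * x" using xpos by simp
  have e: "s = (\<lambda>i. i)" "d = (\<lambda>u. 0)" "q = map (\<lambda>u. (u, 0)) [N..<M]" using 0 by auto
  have a: "map fst q @ map s [0..<N] = [N..<M] @ [0..<N]" proof - have "map fst q = [N..<M]" by (simp add: e comp_def) moreover have "map s [0..<N] = [0..<N]" by (simp add: e) ultimately show ?thesis by simp qed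
  have "mset ([N..<M] @ [0..<N]) = mset ([0..<N] @ [N..<M])" by simp
  also have "[0..<N] @ [N..<M] = [0..<M]" using upt_add_eq_append[of 0 N "M - N"] NM by simp
  finally have b: "mset (map fst q @ map s [0..<N]) = mset [0..<M]" using a by simp
  have c: "map (\<lambda>i. d (s i)) [0..<N] = map (D 0) [0..<N]"
  proof (intro nth_equalityI)
    fix j assume "j < length (map (\<lambda>i. d (s i)) [0..<N])"
    then show "map (\<lambda>i. d (s i)) [0..<N] ! j = map (D 0) [0..<N] ! j"
      using xj[of j] gpos by (simp add: e D_def)
  qed simp
  have "length q = B" by (simp add: e)
  moreover have "\<forall>p<B. snd (q ! p) = 0" by (simp add: e)
  moreover have "\<forall>p<B. snd (q ! p) = 0 \<or> snd (q ! p) \<le> (real 0 + 1 + real p - real B) * x + g + c"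
    using calculation(2) by blast
  moreover have "mset (map (\<lambda>i. d (s i)) [0..<N]) = mset (map (D 0) [0..<N])" by (simp only: c)
  ultimately show ?case using b unfolding inv_def by blast
next
  case (Suc k)
  obtain s0 d0 q0 where h: "H k = (s0, d0, q0)" by (cases "H k") auto
  have IH: "inv k s0 d0 q0" using Suc.IH h by blast
  define l where "l = loc (Suc k)"
  define b where "b = fst (hd q0)"
  define v where "v = max 0 (real (Suc k) * x - g)"
  have new: "s = s0(l := b)" "d = d0(b := v)" "q = tl q0 @ [(s0 l, real (Suc k) * x + g + c)]"
    using step(1)[OF h] Suc.prems by (auto simp: l_def b_def v_def)
  have I1: "mset (map fst q0 @ map s0 [0..<N]) = mset [0..<M]" and I2: "length q0 = B"
    and I3: "\<forall>p<B. snd (q0 ! p) = 0 \<or> snd (q0 ! p) \<le> (real k + 1 + real p - real B) * x + g + c"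
    and I4: "mset (map (\<lambda>i. d0 (s0 i)) [0..<N]) = mset (map (D k) [0..<N])"
    using IH unfolding inv_def by blast+
  have lprops: "l < N" "d0 (s0 l) = D k (N - 1)"
    using least_ok[where d=d0 and s=s0 and k=k, OF I4] step(2)[OF h] by (auto simp: l_def)
  have qne: "q0 \<noteq> []" using I2 B1 by auto
  have qsplit: "map fst q0 = b # map fst (tl q0)" using qne by (cases q0) (auto simp: b_def)
  have dist: "distinct (map fst q0 @ map s0 [0..<N])"
    using mset_eq_imp_distinct_iff[OF I1] by simp
  have bns: "\<And>j. j < N \<Longrightarrow> s0 j \<noteq> b" using dist qsplit by auto
  have mapS: "map s [0..<N] = (map s0 [0..<N])[l := b]" using lprops
    by (auto intro!: nth_equalityI simp: new nth_list_update)
  have mapE: "map (\<lambda>i. d (s i)) [0..<N] = (map (\<lambda>i. d0 (s0 i)) [0..<N])[l := v]" using lprops bns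
    by (auto intro!: nth_equalityI simp: new nth_list_update)
  have "mset (map fst q @ map s [0..<N]) = mset (map fst q0 @ map s0 [0..<N])"
  proof -
    have mem: "s0 l \<in># mset (map s0 [0..<N])" using lprops by auto
    have "mset (map fst q @ map s [0..<N]) = mset (map fst (tl q0)) + {#s0 l#} + mset ((map s0 [0..<N])[l := b])"
      unfolding mapS new(3) by simp
    also have "\<dots> = mset (map fst (tl q0)) + {#s0 l#} + add_mset b (mset (map s0 [0..<N]) - {#s0 l#})"
      using lprops by (subst mset_update) auto
    also have "\<dots> = add_mset b (mset (map fst (tl q0))) + (add_mset (s0 l) (mset (map s0 [0..<N]) - {#s0 l#}))"
      by simp
    also have "\<dots> = mset (map fst q0 @ map s0 [0..<N])"
      by (simp only: insert_DiffM[OF mem] qsplit mset_append) simp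
    finally show ?thesis .
  qed
  hence J1: "mset (map fst q @ map s [0..<N]) = mset [0..<M]" using I1 by simp
  have J2: "length q = B" using new I2 qne B1 by simp
  have J3: "\<forall>p<B. snd (q ! p) = 0 \<or> snd (q ! p) \<le> (real (Suc k) + 1 + real p - real B) * x + g + c"
  proof (intro allI impI)
    fix p assume p: "p < B"
    show "snd (q ! p) = 0 \<or> snd (q ! p) \<le> (real (Suc k) + 1 + real p - real B) * x + g + c"
    proof (cases "p < B - 1")
      case True
      hence "q ! p = q0 ! Suc p" using I2 qne by (simp add: new nth_append nth_tl)
      moreover have "Suc p < B" using True by simp
      ultimately show ?thesis using I3[rule_format, of "Suc p"] by (simp add: algebra_simps)
    next
      case False
      hence "p = B - 1" using p by simp
      hence "q ! p = (s0 l, real (Suc k) * x + g + c)" using I2 qne by (simp add: new nth_append)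
      moreover have "real M = 1 + real p + real N" using \<open>p = B - 1\<close> B1 M by simp
      ultimately show ?thesis by (simp add: algebra_simps)
    qed
  qed
  have J4: "mset (map (\<lambda>i. d (s i)) [0..<N]) = mset (map (D (Suc k)) [0..<N])"
  proof -
    obtain n where nN: "N = Suc n" using N1 by (cases N) auto
    have e1: "[0..<N] = [0..<N-1] @ [N-1]" by (simp add: nN)
    have e2: "[0..<N] = 0 # map Suc [0..<N-1]" by (simp add: nN map_Suc_upt upt_conv_Cons del: upt_Suc)
    have e3: "map (D (Suc k) \<circ> Suc) [0..<N-1] = map (D k) [0..<N-1]"
      by (simp add: D_def)
    have vD: "v = D (Suc k) 0" by (simp add: v_def D_def)
    have lm: "(map (\<lambda>i. d0 (s0 i)) [0..<N]) ! l = D k (N - 1)" using lprops by simp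
    have "mset (map (\<lambda>i. d (s i)) [0..<N]) = mset ((map (\<lambda>i. d0 (s0 i)) [0..<N])[l := v])"
      by (simp only: mapE)
    also have "\<dots> = add_mset v (mset (map (\<lambda>i. d0 (s0 i)) [0..<N]) - {#(map (\<lambda>i. d0 (s0 i)) [0..<N]) ! l#})"
      by (rule mset_update) (simp add: lprops)
    also have "\<dots> = add_mset v (mset (map (D k) [0..<N]) - {#D k (N - 1)#})"
      by (simp only: I4 lm)
    also have "\<dots> = add_mset v (mset (map (D k) [0..<N-1]))"
      by (subst e1) simp
    also have "\<dots> = mset (map (D (Suc k)) [0..<N])"
      by (subst e2) (simp only: list.map map_map e3 mset.simps vD)
    finally show ?thesis .
  qed
  show ?case unfolding inv_def using J1 J2 J3 J4 by blast
qed

abbreviation "Sv \<equiv> horr_serv N f g c M tb"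
abbreviation "Dp \<equiv> horr_dep N f g c M tb"
abbreviation "Qu \<equiv> horr_queue N f g c M tb"

lemma H_eq: "H k = (Sv k, Dp k, Qu k)"
  by (simp add: horr_serv_def horr_dep_def horr_queue_def)

lemma invk: "inv k (Sv k) (Dp k) (Qu k)"
  by (rule inv_all[OF H_eq])

lemma Sv_Suc: "Sv (Suc k) = (Sv k)(loc (Suc k) := fst (hd (Qu k)))"
  using step(1)[OF H_eq[of k]] by (simp add: horr_serv_def)

lemma Dp_Suc: "Dp (Suc k) = (Dp k)(fst (hd (Qu k)) := max 0 (real (Suc k) * x - g))"
  using step(1)[OF H_eq[of k]] by (simp add: horr_dep_def)

lemma loc_Suc: "loc (Suc k) = tb (Suc k) (least_energy_locs N f (Sv k) (Dp k) (real (Suc k) * x))"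
  using step(2)[OF H_eq[of k]] .

lemma Qlen: "length (Qu k) = B" using invk[of k] by (simp add: inv_def)
lemma Qne: "Qu k \<noteq> []" using Qlen[of k] B1 by auto

lemma head_not_serv: "j < N \<Longrightarrow> Sv k j \<noteq> fst (hd (Qu k))"
proof -
  assume j: "j < N"
  have "mset (map fst (Qu k) @ map (Sv k) [0..<N]) = mset [0..<M]" using invk[of k] by (simp add: inv_def)
  hence "distinct (map fst (Qu k) @ map (Sv k) [0..<N])" using mset_eq_imp_distinct_iff by fastforce
  moreover have "fst (hd (Qu k)) \<in> set (map fst (Qu k))" using Qne[of k] by (cases "Qu k") auto
  moreover have "Sv k j \<in> set (map (Sv k) [0..<N])" using j by auto
  ultimately show ?thesis by auto
qed

lemma Sv_lt: "j < N \<Longrightarrow> Sv k j < M"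
proof -
  assume j: "j < N"
  have "mset (map fst (Qu k) @ map (Sv k) [0..<N]) = mset [0..<M]" using invk[of k] by (simp add: inv_def)
  hence "set (map fst (Qu k) @ map (Sv k) [0..<N]) = set [0..<M]" by (metis set_mset_mset)
  moreover have "Sv k j \<in> set (map (Sv k) [0..<N])" using j by auto
  ultimately show ?thesis by auto
qed

lemma dep_bounds: "j < N \<Longrightarrow> D k (N - 1) \<le> Dp k (Sv k j) \<and> Dp k (Sv k j) \<le> D k 0"
proof -
  assume j: "j < N"
  have "mset (map (\<lambda>i. Dp k (Sv k i)) [0..<N]) = mset (map (D k) [0..<N])" using invk[of k] by (simp add: inv_def)
  hence "set (map (\<lambda>i. Dp k (Sv k i)) [0..<N]) = set (map (D k) [0..<N])" by (metis set_mset_mset)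
  moreover have "Dp k (Sv k j) \<in> set (map (\<lambda>i. Dp k (Sv k i)) [0..<N])" using j by auto
  ultimately obtain i where "i < N" "Dp k (Sv k j) = D k i" by auto
  thus ?thesis using D_mono[of i "N - 1" k] D_mono[of 0 i k] by auto
qed

lemma part1: "k \<ge> 1 \<Longrightarrow> backup_available N f g c M tb k"
proof -
  assume "k \<ge> 1"
  then obtain k0 where k: "k = Suc k0" by (cases k) auto
  have I3: "snd (Qu k0 ! 0) = 0 \<or> snd (Qu k0 ! 0) \<le> (real k0 + 1 + real 0 - real B) * x + g + c"
  proof -
    have "\<forall>p<B. snd (Qu k0 ! p) = 0 \<or> snd (Qu k0 ! p) \<le> (real k0 + 1 + real p - real B) * x + g + c"
      using invk[of k0] unfolding inv_def by blast
    moreover have "0 < B" using B1 by simp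
    ultimately show ?thesis by (metis of_nat_0 add_0_right)
  qed
  have hd: "hd (Qu k0) = Qu k0 ! 0" using Qne[of k0] by (cases "Qu k0") auto
  have "(real k0 + 1 - real B) * x + g + c \<le> real k * x - g"
    using Bx k by (simp add: algebra_simps)
  hence "snd (hd (Qu k0)) \<le> max 0 (real k * x - g)" using I3 hd by auto
  thus ?thesis using Qne[of k0] k by (simp add: backup_available_def)
qed

lemma part2: "k \<ge> 1 \<Longrightarrow> relief_flight_time N f g c M tb k \<le> f"
proof -
  assume "k \<ge> 1"
  then obtain k0 where k: "k = Suc k0" by (cases k) auto
  have I4: "mset (map (\<lambda>i. Dp k0 (Sv k0 i)) [0..<N]) = mset (map (D k0) [0..<N])"
    using invk[of k0] by (simp add: inv_def)
  have "Dp k0 (Sv k0 (loc k)) = D k0 (N - 1)"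
    using least_ok(3)[where d="Dp k0" and s="Sv k0" and k=k0, OF I4] loc_Suc[of k0] k by simp
  moreover have "D k0 (N - 1) \<ge> (real k0 - real (N - 1)) * x - g" by (simp add: D_def)
  moreover have "real (N - 1) = real N - 1" using N1 by simp
  ultimately have "Dp k0 (Sv k0 (loc k)) \<ge> (real k0 - real N + 1) * x - g" by (simp add: algebra_simps)
  hence "relief_flight_time N f g c M tb k \<le> real k * x + g - ((real k0 - real N + 1) * x - g)"
    using k by (simp add: relief_flight_time_def horr_relieved_def)
  also have "\<dots> = real N * x + 2 * g" using k by (simp add: algebra_simps)
  also have "\<dots> = f" using Nx by simp
  finally show ?thesis .
qed

lemma part4: "t \<ge> 0 \<Longrightarrow> i < N \<Longrightarrow> horr_covered N f g c M tb i t"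
proof -
  assume t: "t \<ge> 0" and i: "i < N"
  define k where "k = nat \<lfloor>t / x\<rfloor>"
  have tx: "t / x \<ge> 0" using t xpos by simp
  have "real k = of_int \<lfloor>t / x\<rfloor>" using tx by (simp add: k_def)
  hence a: "real k \<le> t / x" "t / x < real k + 1" by linarith+
  have "real k * x \<le> t" using a(1) xpos by (simp add: pos_le_divide_eq)
  moreover have "t < real (Suc k) * x" using a(2) xpos by (simp add: pos_divide_less_eq algebra_simps)
  ultimately have "horr_at N f g c M tb (Sv k i) i t" unfolding horr_at_def by blast
  thus ?thesis unfolding horr_covered_def using Sv_lt[OF i] by blast
qed

lemma frozen:
  assumes "\<forall>m. 1 \<le> m \<and> m \<le> n \<longrightarrow> loc (K + m) \<noteq> i" "i < N"
  shows "Sv (K + n) i = Sv K i \<and> Dp (K + n) (Sv K i) = Dp K (Sv K i)"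
  using assms(1)
proof (induction n)
  case 0
  then show ?case by simp
next
  case (Suc n)
  have IH: "Sv (K + n) i = Sv K i \<and> Dp (K + n) (Sv K i) = Dp K (Sv K i)" using Suc by auto
  have ne: "loc (Suc (K + n)) \<noteq> i" using Suc.prems[rule_format, of "Suc n"] by simp
  have hn: "Sv (K + n) i \<noteq> fst (hd (Qu (K + n)))" using head_not_serv[OF assms(2)] .
  show ?case using IH ne hn by (simp add: Sv_Suc Dp_Suc)
qed

lemma part3: "i < N \<Longrightarrow> \<exists>k'>k. loc k' = i"
proof (rule ccontr)
  assume i: "i < N" and nex: "\<not> (\<exists>k'>k. loc k' = i)"
  obtain n where n: "g < real n * x" using reals_Archimedean3[OF xpos] by blast
  define K where "K = k + n"
  have "\<forall>m. 1 \<le> m \<and> m \<le> N \<longrightarrow> loc (K + m) \<noteq> i" using nex by (auto simp: K_def)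
  from frozen[OF this i] have fr: "Sv (K + N) i = Sv K i" "Dp (K + N) (Sv K i) = Dp K (Sv K i)" by auto
  have "Dp K (Sv K i) \<le> D K 0" using dep_bounds[OF i, of K] by simp
  moreover have "D (K + N) (N - 1) \<le> Dp (K + N) (Sv (K + N) i)" using dep_bounds[OF i, of "K + N"] by simp
  ultimately have le: "D (K + N) (N - 1) \<le> D K 0" using fr by simp
  have r: "real (K + N) - real (N - 1) = real K + 1" using N1 by simp
  have "real n * x \<le> (real K + 1) * x" using xpos by (intro mult_right_mono) (auto simp: K_def)
  hence pos: "(real K + 1) * x - g > 0" using n by linarith
  have "real K * x - g < (real K + 1) * x - g" using xpos by (simp add: algebra_simps)
  hence "D K 0 < D (K + N) (N - 1)" using pos r unfolding D_def by auto
  thus False using le by simp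
qed

end

theorem theorem1:
  fixes N :: nat and f g c :: real and tb :: "nat \<Rightarrow> nat set \<Rightarrow> nat" and M :: nat
  assumes "N \<ge> 1" and "f > 0" and "c \<ge> 0" and "g > 0" and "2 * g < f"
    and tb: "\<And>k S. S \<noteq> {} \<Longrightarrow> S \<subseteq> {..<N} \<Longrightarrow> tb k S \<in> S"
    and M: "M = N + nat \<lceil>(c + 2 * g) / (f - 2 * g) * real N\<rceil>"
  shows "(\<forall>k\<ge>1. backup_available N f g c M tb k)
       \<and> (\<forall>k\<ge>1. relief_flight_time N f g c M tb k \<le> f)
       \<and> (\<forall>k. \<forall>i<N. \<exists>k'>k. horr_loc N f g c M tb k' = i)
       \<and> (\<forall>t\<ge>0. \<forall>i<N. horr_covered N f g c M tb i t)"
proof -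
  interpret hs N f g c tb M using assms by unfold_locales auto
  show ?thesis using part1 part2 part3 part4 by blast
qed

end
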